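(* For every $n\geq1$, the number of $D_{2n}$-orbits of $\mathbf{X}_n$ whose elements have a stabilizer contained in the rotation subgroup $\langle\sigma\rangle=\{1,\sigma,\dots,\sigma^{n-1}\}$ equals $\sum_{d\mid n}\mathrm{orb}_1(d)$.
   Context: For an integer $n\geq1$ let $V_n=\{v_0,\dots,v_{n-1}\}$, indices modulo $n$. The dihedral group $D_{2n}=\{1,\sigma,\dots,\sigma^{n-1},\tau,\sigma\tau,\dots,\sigma^{n-1}\tau\}$ acts on subsets of $V_n$ elementwise, with $\sigma(v_i)=v_{i+1}$, $\tau(v_i)=v_{n-i}$. Let $\mathbf{X}_n$ be the family of subsets $X\subseteq V_n$ such that (a) there is no $i\in\mathbb{Z}_n$ with $v_i,v_{i+1}\in X$, and (b) for every $i\in\mathbb{Z}_n$ at least one of $v_i,v_{i+1},v_{i+2}$ lies in $X$ (for $n\geq3$ these are exactly the maximal independent sets of the cycle graph $C_n$ with edges $v_iv_{i+1}$). $\mathbf{X}_n$ is invariant under $D_{2n}$. For $X\in\mathbf{X}_n$, $\mathrm{Stab}(X)=\{g\in D_{2n}:g(X)=X\}$. For $d\mid 2n$, $\mathrm{orb}_d(n)$ denotes the number of $D_{2n}$-orbits of $\mathbf{X}_n$ of cardinality $2n/d$ (equivalently, whose elements have stabilizer of order $d$). *)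

theory Defs
  imports Main
begin

text \<open>Vertices v_0,...,v_{n-1} are the naturals 0..n-1 (indices mod n).
 Elements of the dihedral group D_{2n} are pairs (b,k) with k < n:
 (False,k) is sigma^k and (True,k) is sigma^k tau. The group is kept abstract
 (2n distinct elements) even when n \<le> 2, where the action is not faithful.\<close>

definition dihedral :: "nat \<Rightarrow> (bool \<times> nat) set" where
  "dihedral n = {(b, k). k < n}"

definition rotations :: "nat \<Rightarrow> (bool \<times> nat) set" where
  "rotations n = {(False, k) | k. k < n}"

text \<open>sigma^k (v_i) = v_{i+k};  sigma^k tau (v_i) = v_{k-i}.\<close>
definition act :: "nat \<Rightarrow> bool \<times> nat \<Rightarrow> nat \<Rightarrow> nat" where
  "act n g i = (if fst g then (snd g + n - i mod n) mod n else (i + snd g) mod n)"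

definition act_set :: "nat \<Rightarrow> bool \<times> nat \<Rightarrow> nat set \<Rightarrow> nat set" where
  "act_set n g X = act n g ` X"

definition Xfam :: "nat \<Rightarrow> nat set set" where
  "Xfam n = {X. X \<subseteq> {0..<n}
      \<and> \<not> (\<exists>i<n. i \<in> X \<and> (i + 1) mod n \<in> X)
      \<and> (\<forall>i<n. i \<in> X \<or> (i + 1) mod n \<in> X \<or> (i + 2) mod n \<in> X)}"

definition Stab :: "nat \<Rightarrow> nat set \<Rightarrow> (bool \<times> nat) set" where
  "Stab n X = {g \<in> dihedral n. act_set n g X = X}"

definition orbit :: "nat \<Rightarrow> nat set \<Rightarrow> nat set set" where
  "orbit n X = (\<lambda>g. act_set n g X) ` dihedral n"

definition orbits :: "nat \<Rightarrow> nat set set set" where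
  "orbits n = orbit n ` Xfam n"

definition orb :: "nat \<Rightarrow> nat \<Rightarrow> nat" where
  "orb d n = card {Y \<in> orbits n. card Y = (2 * n) div d}"

end

theory Submission
  imports Defs
begin

definition aff :: "bool \<times> nat \<Rightarrow> int \<Rightarrow> int" where
  "aff g j = (if fst g then int (snd g) - j else j + int (snd g))"

lemma act_int: assumes "n > 0" shows "int (act n g i) = aff g (int i) mod int n"
proof (cases g)
  case (Pair b k)
  have "i mod n < n" using assms by simp
  then have e: "int (k + n - i mod n) = int k + int n - int i mod int n"
    by (simp add: of_nat_diff zmod_int)
  have "(int k + int n - int i mod int n) mod int n = (int k - int i) mod int n"
    by (metis add.commute add_diff_eq mod_add_self2 mod_diff_right_eq)
  then show ?thesis using assms Pair e
    by (auto simp: act_def aff_def zmod_int)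
qed

lemma aff_mod: "aff g (x mod m) mod m = aff g x mod m"
  by (auto simp: aff_def mod_simps)

definition mul :: "nat \<Rightarrow> bool \<times> nat \<Rightarrow> bool \<times> nat \<Rightarrow> bool \<times> nat" where
  "mul n g h = (fst g \<noteq> fst h, nat ((if fst g then int (snd g) - int (snd h) else int (snd g) + int (snd h)) mod int n))"

definition dinv :: "nat \<Rightarrow> bool \<times> nat \<Rightarrow> bool \<times> nat" where
  "dinv n g = (fst g, if fst g then snd g else nat ((- int (snd g)) mod int n))"

lemma aff_mul: assumes "n > 0" shows "aff (mul n g h) x mod int n = aff g (aff h x) mod int n"
  using assms by (cases g; cases h) (auto simp: aff_def mul_def mod_simps algebra_simps)

lemma mod_helper: "((x::int) + (b + (- b) mod m)) mod m = x mod m"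
proof -
  have "(x + (b + (- b) mod m)) mod m = ((x + b) + (- b) mod m) mod m" by (simp add: add.assoc)
  also have "\<dots> = ((x + b) + (- b)) mod m" by (rule mod_add_right_eq)
  finally show ?thesis by simp
qed

lemma aff_inv: assumes "n > 0" shows "aff (dinv n g) (aff g x) mod int n = x mod int n"
  using assms by (cases g) (auto simp: aff_def dinv_def mod_simps algebra_simps mod_helper)

lemma aff_inv2: assumes "n > 0" shows "aff g (aff (dinv n g) x) mod int n = x mod int n"
  using assms by (cases g) (auto simp: aff_def dinv_def mod_simps algebra_simps mod_helper)

lemma act_eq_iff: "n > 0 \<Longrightarrow> act n g i = act n h j \<longleftrightarrow> aff g (int i) mod int n = aff h (int j) mod int n"
  by (metis act_int of_nat_eq_iff)

lemma act_mul: assumes "n > 0" shows "act n (mul n g h) i = act n g (act n h i)"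
  using assms by (simp add: act_eq_iff act_int aff_mul aff_mod)

lemma act_inv: assumes "n > 0" shows "act n (dinv n g) (act n g i) = i mod n"
proof -
  have "int (act n (dinv n g) (act n g i)) = int i mod int n"
    using assms by (simp add: act_int aff_mod aff_inv)
  then show ?thesis by (metis of_nat_eq_iff zmod_int)
qed

lemma act_inv2: assumes "n > 0" shows "act n g (act n (dinv n g) i) = i mod n"
proof -
  have "int (act n g (act n (dinv n g) i)) = int i mod int n"
    using assms by (simp add: act_int aff_mod aff_inv2)
  then show ?thesis by (metis of_nat_eq_iff zmod_int)
qed

lemma act_lt: "n > 0 \<Longrightarrow> act n g i < n"
  by (simp add: act_def)

lemma act_id: "act n (False, 0) i = i mod n"
  by (simp add: act_def)

lemma act_set_sub: "n > 0 \<Longrightarrow> act_set n g X \<subseteq> {0..<n}"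
  by (auto simp: act_set_def act_lt)

lemma act_set_mul: "n > 0 \<Longrightarrow> act_set n (mul n g h) X = act_set n g (act_set n h X)"
  by (auto simp: act_set_def act_mul image_comp)

lemma act_set_id: "X \<subseteq> {0..<n} \<Longrightarrow> act_set n (False, 0) X = X"
  by (auto simp: act_set_def act_id subset_iff image_iff)

lemma act_set_inv: assumes "n > 0" "X \<subseteq> {0..<n}"
  shows "act_set n (dinv n g) (act_set n g X) = X"
proof -
  have "act_set n (dinv n g) (act_set n g X) = (\<lambda>i. i mod n) ` X"
    using assms by (auto simp: act_set_def image_comp act_inv comp_def)
  also have "\<dots> = X" using assms(2) by (force simp: subset_iff image_iff)
  finally show ?thesis .
qed

lemma act_set_inv2: assumes "n > 0" "X \<subseteq> {0..<n}"
  shows "act_set n g (act_set n (dinv n g) X) = X"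
proof -
  have "act_set n g (act_set n (dinv n g) X) = (\<lambda>i. i mod n) ` X"
    using assms by (auto simp: act_set_def image_comp act_inv2 comp_def)
  also have "\<dots> = X" using assms(2) by (force simp: subset_iff image_iff)
  finally show ?thesis .
qed

lemma mul_dih: "n > 0 \<Longrightarrow> mul n g h \<in> dihedral n"
  by (simp add: mul_def dihedral_def case_prod_beta nat_less_iff)

lemma dinv_dih: "n > 0 \<Longrightarrow> g \<in> dihedral n \<Longrightarrow> dinv n g \<in> dihedral n"
  by (auto simp: dinv_def dihedral_def case_prod_beta nat_less_iff)

lemma id_dih: "n > 0 \<Longrightarrow> (False, 0) \<in> dihedral n"
  by (simp add: dihedral_def)

lemma small_dvd: assumes "int n dvd x" "\<bar>x\<bar> < int n" shows "x = 0"
proof (rule ccontr)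
  assume "x \<noteq> 0"
  then have "\<bar>int n\<bar> \<le> \<bar>x\<bar>" using dvd_imp_le_int assms(1) by blast
  then show False using assms(2) by simp
qed

lemma mul_dinv_eq:
  assumes "n > 0" "g \<in> dihedral n" "h \<in> dihedral n" "mul n (dinv n h) g = (False, 0)"
  shows "g = h"
proof -
  obtain a k where g: "g = (a, k)" "k < n" using assms(2) by (auto simp: dihedral_def)
  obtain b l where h: "h = (b, l)" "l < n" using assms(3) by (auto simp: dihedral_def)
  have ab: "a = b" using assms(4) g h by (auto simp: mul_def dinv_def split: if_splits)
  show ?thesis
  proof (cases b)
    case True
    then have "nat ((int l - int k) mod int n) = 0" using assms(4) g h ab
      by (auto simp: mul_def dinv_def)
    moreover have "(int l - int k) mod int n \<ge> 0" using assms(1) by simp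
    ultimately have "(int l - int k) mod int n = 0" by linarith
    then have "int n dvd int l - int k" by (simp add: mod_eq_0_iff_dvd)
    then have "int l - int k = 0" using g h
      using g h by (intro small_dvd[of n]) auto
    then show ?thesis using g h ab by simp
  next
    case False
    have nn: "int (nat ((- int l) mod int n)) = (- int l) mod int n" using assms(1) by simp
    have "nat ((int (nat ((- int l) mod int n)) + int k) mod int n) = 0" using assms(4) g h ab False
      by (simp add: mul_def dinv_def)
    then have "nat (((- int l) mod int n + int k) mod int n) = 0" by (simp only: nn)
    moreover have "((- int l) mod int n + int k) mod int n \<ge> 0" using assms(1) by simp
    ultimately have "((- int l) mod int n + int k) mod int n = 0" by linarith
    then have "((- int l) + int k) mod int n = 0"
      by (simp add: mod_add_left_eq)
    then have "int n dvd int k - int l" by (simp add: mod_eq_0_iff_dvd)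
    then have "int k - int l = 0" using g h
      using g h by (intro small_dvd[of n]) auto
    then show ?thesis using g h ab by simp
  qed
qed

lemma orbit_act: assumes "n > 0" "X \<subseteq> {0..<n}" "g \<in> dihedral n"
  shows "orbit n (act_set n g X) = orbit n X"
proof
  show "orbit n (act_set n g X) \<subseteq> orbit n X"
  proof
    fix Z assume "Z \<in> orbit n (act_set n g X)"
    then obtain h where h: "h \<in> dihedral n" "Z = act_set n h (act_set n g X)" by (auto simp: orbit_def)
    then have "Z = act_set n (mul n h g) X" using assms by (simp add: act_set_mul)
    then show "Z \<in> orbit n X" using assms by (auto simp: orbit_def intro!: mul_dih)
  qed
next
  show "orbit n X \<subseteq> orbit n (act_set n g X)"
  proof
    fix Z assume "Z \<in> orbit n X"
    then obtain h where h: "h \<in> dihedral n" "Z = act_set n h X" by (auto simp: orbit_def)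
    have "Z = act_set n (mul n h (dinv n g)) (act_set n g X)"
      using assms h by (simp add: act_set_mul act_set_inv)
    then show "Z \<in> orbit n (act_set n g X)"
      using assms by (auto simp: orbit_def intro!: mul_dih)
  qed
qed

lemma card_dihedral: "card (dihedral n) = 2 * n"
proof -
  have "dihedral n = UNIV \<times> {..<n}" by (auto simp: dihedral_def)
  then show ?thesis by (simp add: card_cartesian_product)
qed

lemma finite_dihedral: "finite (dihedral n)"
proof -
  have "dihedral n = UNIV \<times> {..<n}" by (auto simp: dihedral_def)
  then show ?thesis by simp
qed

lemma orbit_card_iff: assumes "n > 0" "X \<subseteq> {0..<n}"
  shows "card (orbit n X) = 2 * n \<longleftrightarrow> Stab n X = {(False, 0)}"
proof -
  have "card (orbit n X) = 2 * n \<longleftrightarrow> inj_on (\<lambda>g. act_set n g X) (dihedral n)"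
    using inj_on_iff_eq_card[OF finite_dihedral, of "\<lambda>g. act_set n g X" n]
    by (simp add: orbit_def card_dihedral)
  also have "\<dots> \<longleftrightarrow> Stab n X = {(False, 0)}"
  proof
    assume inj: "inj_on (\<lambda>g. act_set n g X) (dihedral n)"
    show "Stab n X = {(False, 0)}"
    proof
      show "Stab n X \<subseteq> {(False, 0)}"
      proof
        fix g assume "g \<in> Stab n X"
        then have "g \<in> dihedral n" "act_set n g X = act_set n (False, 0) X"
          using assms by (auto simp: Stab_def act_set_id)
        then show "g \<in> {(False, 0)}" using inj id_dih[OF assms(1)]
          by (auto dest: inj_onD)
      qed
      show "{(False, 0)} \<subseteq> Stab n X" using assms by (simp add: Stab_def act_set_id id_dih)
    qed
  next
    assume st: "Stab n X = {(False, 0)}"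
    show "inj_on (\<lambda>g. act_set n g X) (dihedral n)"
    proof (rule inj_onI)
      fix g h assume gh: "g \<in> dihedral n" "h \<in> dihedral n" "act_set n g X = act_set n h X"
      have "act_set n (mul n (dinv n h) g) X = X"
        using assms gh by (simp add: act_set_mul act_set_inv)
      then have "mul n (dinv n h) g \<in> Stab n X" using assms by (simp add: Stab_def mul_dih)
      then have "mul n (dinv n h) g = (False, 0)" using st by simp
      then show "g = h" using mul_dinv_eq assms gh by blast
    qed
  qed
  finally show ?thesis .
qed

definition lift :: "nat \<Rightarrow> nat \<Rightarrow> nat set \<Rightarrow> nat set" where
  "lift n d X = {i. i < n \<and> i mod d \<in> X}"

definition red :: "nat \<Rightarrow> bool \<times> nat \<Rightarrow> bool \<times> nat" where
  "red d g = (fst g, snd g mod d)"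

lemma aff_red: "aff (red d g) x mod int d = aff g x mod int d"
  by (auto simp: aff_def red_def mod_simps zmod_int)

lemma int_act_red: assumes "d > 0" shows "int (act d (red d g) x) = aff g (int x) mod int d"
  using assms by (simp add: act_int aff_red)

lemma act_mod: assumes "n > 0" "d > 0" "d dvd n"
  shows "act n g i mod d = act d (red d g) (i mod d)"
proof -
  have dv: "int d dvd int n" using assms(3) by simp
  have "int (act n g i mod d) = (aff g (int i) mod int n) mod int d"
    using assms by (simp add: zmod_int act_int)
  also have "\<dots> = aff g (int i) mod int d" using dv by (simp add: mod_mod_cancel)
  also have "\<dots> = aff g (int i mod int d) mod int d" by (simp add: aff_mod)
  also have "\<dots> = int (act d (red d g) (i mod d))" using assms by (simp add: int_act_red zmod_int)
  finally show ?thesis by simp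
qed

lemma act_red_dinv: assumes "n > 0" "d > 0" "d dvd n"
  shows "act d (red d (dinv n g)) (act d (red d g) x) = x mod d"
proof -
  have dv: "int d dvd int n" using assms(3) by simp
  have "int (act d (red d (dinv n g)) (act d (red d g) x))
      = aff (dinv n g) (aff g (int x) mod int d) mod int d"
    using assms by (simp add: int_act_red)
  also have "\<dots> = aff (dinv n g) (aff g (int x)) mod int d" by (simp add: aff_mod)
  also have "\<dots> = (aff (dinv n g) (aff g (int x)) mod int n) mod int d"
    using dv by (simp add: mod_mod_cancel)
  also have "\<dots> = (int x mod int n) mod int d" using assms by (simp add: aff_inv)
  also have "\<dots> = int (x mod d)" using dv by (simp add: mod_mod_cancel zmod_int)
  finally show ?thesis by simp
qed

lemma act_set_lift: assumes "n > 0" "d > 0" "d dvd n" "X \<subseteq> {0..<d}"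
  shows "act_set n g (lift n d X) = lift n d (act_set d (red d g) X)"
proof
  show "act_set n g (lift n d X) \<subseteq> lift n d (act_set d (red d g) X)"
  proof
    fix y assume "y \<in> act_set n g (lift n d X)"
    then obtain i where i: "i < n" "i mod d \<in> X" "y = act n g i"
      by (auto simp: act_set_def lift_def)
    have "y < n" using i assms(1) by (simp add: act_lt)
    moreover have "y mod d = act d (red d g) (i mod d)" using i assms(1-3) by (simp add: act_mod)
    ultimately show "y \<in> lift n d (act_set d (red d g) X)"
      using i(2) by (simp add: lift_def act_set_def)
  qed
next
  show "lift n d (act_set d (red d g) X) \<subseteq> act_set n g (lift n d X)"
  proof
    fix y assume "y \<in> lift n d (act_set d (red d g) X)"
    then obtain x where y: "y < n" "x \<in> X" "y mod d = act d (red d g) x"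
      by (auto simp: lift_def act_set_def)
    define i where "i = act n (dinv n g) y"
    have "act n g i = y" using assms y by (simp add: i_def act_inv2)
    moreover have "i mod d = x"
    proof -
      have "i mod d = act d (red d (dinv n g)) (y mod d)" using assms by (simp add: i_def act_mod)
      also have "\<dots> = x mod d" using y assms by (simp add: act_red_dinv)
      also have "\<dots> = x" using y assms by auto
      finally show ?thesis .
    qed
    moreover have "i < n" using assms by (simp add: i_def act_lt)
    ultimately have "i \<in> lift n d X" "y = act n g i" using y by (simp_all add: lift_def)
    then show "y \<in> act_set n g (lift n d X)" unfolding act_set_def by (rule image_eqI[rotated])
  qed
qed

lemma lift_restrict: assumes "d > 0" "d \<le> n" "A \<subseteq> {0..<d}"
  shows "lift n d A \<inter> {0..<d} = A"
proof (rule set_eqI)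
  fix x
  show "x \<in> lift n d A \<inter> {0..<d} \<longleftrightarrow> x \<in> A"
  proof (cases "x < d")
    case True
    then have "x < n" "x mod d = x" using assms by simp_all
    then show ?thesis using True by (simp add: lift_def)
  next
    case False
    then have "x \<notin> A" using assms(3) by auto
    then show ?thesis using False by simp
  qed
qed

lemma lift_inj: assumes "d > 0" "d \<le> n" "A \<subseteq> {0..<d}" "B \<subseteq> {0..<d}" "lift n d A = lift n d B"
  shows "A = B"
proof -
  have "A = lift n d A \<inter> {0..<d}" using lift_restrict[OF assms(1,2,3)] by (rule sym)
  also have "\<dots> = lift n d B \<inter> {0..<d}" using assms(5) by (rule arg_cong)
  also have "\<dots> = B" using lift_restrict[OF assms(1,2,4)] .
  finally show ?thesis .
qed

lemma Xfam_iff: "X \<in> Xfam n \<longleftrightarrow> X \<subseteq> {0..<n}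
      \<and> (\<forall>i<n. \<not> (i \<in> X \<and> (i + 1) mod n \<in> X))
      \<and> (\<forall>i<n. i \<in> X \<or> (i + 1) mod n \<in> X \<or> (i + 2) mod n \<in> X)"
  unfolding Xfam_def by blast

lemma lift_Xfam: assumes "n > 0" "d > 0" "d dvd n" "X \<subseteq> {0..<d}"
  shows "lift n d X \<in> Xfam n \<longleftrightarrow> X \<in> Xfam d"
proof -
  have dn: "d \<le> n" using assms by (simp add: dvd_imp_le)
  have m: "(i + j) mod n mod d = (i mod d + j) mod d" for i j
    using assms(3) by (simp add: mod_mod_cancel mod_simps)
  have memL: "y \<in> lift n d X \<longleftrightarrow> y < n \<and> y mod d \<in> X" for y by (simp add: lift_def)
  have ltd: "i < d \<Longrightarrow> i mod d = i" for i by simp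
  show ?thesis
  proof
    assume L: "lift n d X \<in> Xfam n"
    have L2: "\<forall>i<n. \<not> (i \<in> lift n d X \<and> (i + 1) mod n \<in> lift n d X)"
     and L3: "\<forall>i<n. i \<in> lift n d X \<or> (i + 1) mod n \<in> lift n d X \<or> (i + 2) mod n \<in> lift n d X"
      using L unfolding Xfam_iff by blast+
    have "\<not> (i \<in> X \<and> (i + 1) mod d \<in> X)" if i: "i < d" for i
    proof
      assume h: "i \<in> X \<and> (i + 1) mod d \<in> X"
      have "i < n" using i dn by simp
      moreover have "i \<in> lift n d X" using h i dn by (simp add: memL)
      moreover have "(i + 1) mod n \<in> lift n d X" using h i m[of i 1] assms(1) by (simp add: memL)
      ultimately show False using L2 by blast
    qed
    moreover have "i \<in> X \<or> (i + 1) mod d \<in> X \<or> (i + 2) mod d \<in> X" if i: "i < d" for i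
    proof -
      have "i < n" using i dn by simp
      then have "i \<in> lift n d X \<or> (i + 1) mod n \<in> lift n d X \<or> (i + 2) mod n \<in> lift n d X"
        using L3 by blast
      then show ?thesis using i m[of i 1] m[of i 2] by (auto simp: memL)
    qed
    ultimately show "X \<in> Xfam d" using assms(4) unfolding Xfam_iff by blast
  next
    assume X: "X \<in> Xfam d"
    have X2: "\<forall>i<d. \<not> (i \<in> X \<and> (i + 1) mod d \<in> X)"
     and X3: "\<forall>i<d. i \<in> X \<or> (i + 1) mod d \<in> X \<or> (i + 2) mod d \<in> X"
      using X unfolding Xfam_iff by blast+
    have "lift n d X \<subseteq> {0..<n}" by (auto simp: lift_def)
    moreover have "\<not> (i \<in> lift n d X \<and> (i + 1) mod n \<in> lift n d X)" if i: "i < n" for i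
    proof
      assume h: "i \<in> lift n d X \<and> (i + 1) mod n \<in> lift n d X"
      then have "i mod d \<in> X" "(i mod d + 1) mod d \<in> X" using m[of i 1] by (simp_all add: memL)
      moreover have "i mod d < d" using assms(2) by simp
      ultimately show False using X2 by blast
    qed
    moreover have "i \<in> lift n d X \<or> (i + 1) mod n \<in> lift n d X \<or> (i + 2) mod n \<in> lift n d X"
      if i: "i < n" for i
    proof -
      have "i mod d < d" using assms(2) by simp
      then have "i mod d \<in> X \<or> (i mod d + 1) mod d \<in> X \<or> (i mod d + 2) mod d \<in> X"
        using X3 by blast
      then show ?thesis using i assms(1) m[of i 1] m[of i 2] by (auto simp: memL)
    qed
    ultimately show "lift n d X \<in> Xfam n" unfolding Xfam_iff by blast
  qed
qed

lemma red_dih: assumes "d > 0" "d \<le> n" shows "red d ` dihedral n = dihedral d"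
proof
  show "red d ` dihedral n \<subseteq> dihedral d" using assms by (auto simp: red_def dihedral_def)
  show "dihedral d \<subseteq> red d ` dihedral n"
  proof
    fix g assume "g \<in> dihedral d"
    then obtain b k where g: "g = (b, k)" "k < d" by (auto simp: dihedral_def)
    then have "g = red d (b, k)" "(b, k) \<in> dihedral n" using assms by (auto simp: red_def dihedral_def)
    then show "g \<in> red d ` dihedral n" by blast
  qed
qed

lemma orbit_lift: assumes "n > 0" "d > 0" "d dvd n" "X \<subseteq> {0..<d}"
  shows "orbit n (lift n d X) = lift n d ` orbit d X"
proof -
  have dn: "d \<le> n" using assms by (simp add: dvd_imp_le)
  have "orbit n (lift n d X) = (\<lambda>g. act_set n g (lift n d X)) ` dihedral n"
    by (simp add: orbit_def)
  also have "\<dots> = (\<lambda>g. lift n d (act_set d (red d g) X)) ` dihedral n"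
    by (rule image_cong[OF refl]) (rule act_set_lift[OF assms])
  also have "\<dots> = (\<lambda>g. lift n d (act_set d g X)) ` (red d ` dihedral n)"
    by (simp only: image_image)
  also have "\<dots> = (\<lambda>g. lift n d (act_set d g X)) ` dihedral d"
    by (simp only: red_dih[OF assms(2) dn])
  also have "\<dots> = lift n d ` orbit d X"
    by (simp only: orbit_def image_image)
  finally show ?thesis .
qed

lemma Stab_lift: assumes "n > 0" "d > 0" "d dvd n" "X \<subseteq> {0..<d}" "k < n"
  shows "(b, k) \<in> Stab n (lift n d X) \<longleftrightarrow> (b, k mod d) \<in> Stab d X"
proof -
  have dn: "d \<le> n" using assms by (simp add: dvd_imp_le)
  have e1: "act_set n (b, k) (lift n d X) = lift n d (act_set d (b, k mod d) X)"
    using act_set_lift[OF assms(1-4), of "(b, k)"] by (simp add: red_def)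
  have e2: "lift n d (act_set d (b, k mod d) X) = lift n d X \<longleftrightarrow> act_set d (b, k mod d) X = X"
  proof
    assume "lift n d (act_set d (b, k mod d) X) = lift n d X"
    then show "act_set d (b, k mod d) X = X"
      by (rule lift_inj[OF assms(2) dn act_set_sub[OF assms(2)] assms(4)])
  qed simp
  have "(b, k) \<in> Stab n (lift n d X) \<longleftrightarrow> act_set n (b, k) (lift n d X) = lift n d X"
    using assms(5) by (simp add: Stab_def dihedral_def)
  also have "\<dots> \<longleftrightarrow> act_set d (b, k mod d) X = X" using e1 e2 by simp
  also have "\<dots> \<longleftrightarrow> (b, k mod d) \<in> Stab d X" using assms(2) by (simp add: Stab_def dihedral_def)
  finally show ?thesis .
qed

lemma Stab_sub: "X \<in> Xfam n \<Longrightarrow> X \<subseteq> {0..<n}"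
  by (simp add: Xfam_def)

lemma Stab_mem: "g \<in> Stab n X \<Longrightarrow> x \<in> X \<Longrightarrow> act n g x \<in> X"
  by (auto simp: Stab_def act_set_def)

lemma Stab_mul: "n > 0 \<Longrightarrow> g \<in> Stab n X \<Longrightarrow> h \<in> Stab n X \<Longrightarrow> mul n g h \<in> Stab n X"
  by (simp add: Stab_def act_set_mul mul_dih)

lemma Stab_dinv: "n > 0 \<Longrightarrow> X \<subseteq> {0..<n} \<Longrightarrow> g \<in> Stab n X \<Longrightarrow> dinv n g \<in> Stab n X"
  using act_set_inv[of n X g] by (auto simp: Stab_def dinv_dih)

lemma mul_rot: assumes "n > 0"
  shows "mul n (False, a mod n) (False, b mod n) = (False, (a + b) mod n)"
proof -
  have "int (a mod n) + int (b mod n) = int (a mod n + b mod n)" by simp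
  then have "nat ((int (a mod n) + int (b mod n)) mod int n) = (a mod n + b mod n) mod n"
    by (metis nat_int zmod_int)
  then show ?thesis by (simp add: mul_def mod_add_eq)
qed

lemma mul_rot_sub: assumes "n > 0" "b \<le> a"
  shows "mul n (False, a mod n) (dinv n (False, b mod n)) = (False, (a - b) mod n)"
proof -
  have "int (nat ((int (a mod n) + int (nat (- int (b mod n) mod int n))) mod int n))
      = (int a mod int n + (- (int b mod int n)) mod int n) mod int n"
    using assms by (simp add: zmod_int)
  also have "\<dots> = (int a - int b) mod int n" by (simp add: mod_simps)
  also have "\<dots> = int ((a - b) mod n)" using assms by (simp add: zmod_int of_nat_diff)
  finally have eq: "nat ((int (a mod n) + int (nat (- int (b mod n) mod int n))) mod int n) = (a - b) mod n"
    by (simp only: of_nat_eq_iff)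
  show ?thesis unfolding mul_def dinv_def by (simp only: fst_conv snd_conv if_False eq) simp
qed

lemma period: assumes n: "n > 0" and X: "X \<in> Xfam n" and R: "Stab n X \<subseteq> rotations n"
  obtains d X' where "d > 0" "d dvd n" "X' \<in> Xfam d" "Stab d X' = {(False, 0)}" "X = lift n d X'"
proof -
  have XS: "X \<subseteq> {0..<n}" using X by (simp add: Xfam_def)
  define S where "S = {k. (False, k mod n) \<in> Stab n X}"
  have S0: "0 \<in> S" "n \<in> S" using XS n by (auto simp: S_def Stab_def act_set_id id_dih)
  have Sadd: "a + b \<in> S" if "a \<in> S" "b \<in> S" for a b
    using Stab_mul[OF n, of "(False, a mod n)" X "(False, b mod n)"] that n
    by (simp add: S_def mul_rot)
  have Ssub: "a - b \<in> S" if "a \<in> S" "b \<in> S" "b \<le> a" for a b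
    using Stab_mul[OF n, of "(False, a mod n)" X "dinv n (False, b mod n)"]
      Stab_dinv[OF n XS, of "(False, b mod n)"] that n
    by (simp add: S_def mul_rot_sub)
  define d where "d = (LEAST k. 0 < k \<and> k \<in> S)"
  have dS: "0 < d \<and> d \<in> S" unfolding d_def by (rule LeastI[of _ n]) (use n S0 in auto)
  have dmin: "\<not> (0 < k \<and> k \<in> S)" if "k < d" for k
    using not_less_Least[of k "\<lambda>k. 0 < k \<and> k \<in> S"] that unfolding d_def by blast
  have Smult: "m * d \<in> S" for m
    by (induction m) (use S0 dS Sadd in auto)
  have Sdvd: "d dvd k" if "k \<in> S" for k
  proof -
    have "k - (k div d) * d \<in> S" using Ssub[OF that Smult[of "k div d"]]
      by (simp add: div_times_less_eq_dividend)
    then have "k mod d \<in> S" by (simp add: minus_div_mult_eq_mod)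
    moreover have "k mod d < d" using dS by simp
    ultimately have "k mod d = 0" using dmin[of "k mod d"] by simp
    then show ?thesis by (simp add: dvd_eq_mod_eq_0)
  qed
  have dn: "d dvd n" using Sdvd S0 by blast
  have dle: "d \<le> n" using dn n by (simp add: dvd_imp_le)
  define X' where "X' = X \<inter> {0..<d}"
  have XL: "X = lift n d X'"
  proof
    show "X \<subseteq> lift n d X'"
    proof
      fix i assume i: "i \<in> X"
      then have iL: "i < n" using XS by auto
      have q: "(i div d) * d \<le> i" by (simp add: div_times_less_eq_dividend)
      have "n - (i div d) * d \<in> S" using Ssub[OF S0(2) Smult[of "i div d"]] q iL by simp
      then have st: "(False, (n - (i div d) * d) mod n) \<in> Stab n X" by (simp add: S_def)
      have "act n (False, (n - (i div d) * d) mod n) i = (i + (n - (i div d) * d)) mod n"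
        by (simp add: act_def mod_add_right_eq)
      also have "i + (n - (i div d) * d) = i mod d + n" using q iL
        using mod_div_mult_eq[of i d] by linarith
      also have "(i mod d + n) mod n = i mod d"
      proof -
        have "i mod d < n" using dS dle by (meson mod_less_divisor order_less_le_trans)
        then show ?thesis by simp
      qed
      finally have "i mod d \<in> X" using Stab_mem[OF st i] by simp
      then show "i \<in> lift n d X'" using iL dS by (simp add: lift_def X'_def)
    qed
  next
    show "lift n d X' \<subseteq> X"
    proof
      fix i assume "i \<in> lift n d X'"
      then have i: "i < n" "i mod d \<in> X" by (auto simp: lift_def X'_def)
      have st: "(False, ((i div d) * d) mod n) \<in> Stab n X" using Smult by (simp add: S_def)
      have "act n (False, ((i div d) * d) mod n) (i mod d) = (i mod d + (i div d) * d) mod n"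
        by (simp add: act_def mod_add_right_eq)
      also have "\<dots> = i" using i by simp
      finally show "i \<in> X" using Stab_mem[OF st i(2)] by simp
    qed
  qed
  have X'S: "X' \<subseteq> {0..<d}" by (auto simp: X'_def)
  have X'F: "X' \<in> Xfam d" using lift_Xfam[OF n _ dn X'S] dS X XL by simp
  have "Stab d X' = {(False, 0)}"
  proof
    show "{(False, 0)} \<subseteq> Stab d X'" using X'S dS by (simp add: Stab_def act_set_id id_dih)
    show "Stab d X' \<subseteq> {(False, 0)}"
    proof
      fix g assume g: "g \<in> Stab d X'"
      then obtain b k where bk: "g = (b, k)" "k < d" by (auto simp: Stab_def dihedral_def)
      then have "(b, k mod d) \<in> Stab d X'" using g by simp
      then have "(b, k) \<in> Stab n X" using Stab_lift[OF n _ dn X'S, of k b] bk dS dle XL by simp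
      then have "b = False" "k \<in> S" using R bk dle by (auto simp: rotations_def S_def)
      moreover have "k = 0" using Sdvd[OF \<open>k \<in> S\<close>] bk(2) nat_dvd_not_less[of k d] by (cases "k = 0") auto
      ultimately show "g \<in> {(False, 0)}" using bk by simp
    qed
  qed
  then show ?thesis using that dS dn X'F XL by blast
qed

lemma F_mem: assumes "d > 0" "Y \<in> orbits d" "card Y = 2 * d" "Z \<in> Y"
  shows "Z \<subseteq> {0..<d}" "Stab d Z = {(False, 0)}"
proof -
  obtain X g where X: "X \<in> Xfam d" "Y = orbit d X" "g \<in> dihedral d" "Z = act_set d g X"
    using assms by (auto simp: orbits_def orbit_def)
  show Z: "Z \<subseteq> {0..<d}" using X assms(1) by (simp add: act_set_sub)
  have "orbit d Z = Y" using X assms(1) orbit_act[OF assms(1) Stab_sub[OF X(1)] X(3)] by simp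
  then show "Stab d Z = {(False, 0)}" using orbit_card_iff[OF assms(1) Z] assms(3) by simp
qed

lemma orbit_self: "n > 0 \<Longrightarrow> X \<subseteq> {0..<n} \<Longrightarrow> X \<in> orbit n X"
  unfolding orbit_def using id_dih act_set_id by (metis image_eqI)

lemma lift_eq_dvd: assumes n: "n > 0" and d: "d > 0" "d dvd n" and e: "e > 0" "e dvd n"
  and A: "A \<subseteq> {0..<d}" and B: "B \<subseteq> {0..<e}" and SB: "Stab e B = {(False, 0)}"
  and eq: "lift n d A = lift n e B"
  shows "e dvd d"
proof -
  define k where "k = d mod n"
  have kn: "k < n" using n by (simp add: k_def)
  have "k mod d = 0" using d by (simp add: k_def mod_mod_cancel)
  moreover have "(False, 0) \<in> Stab d A" using A d by (simp add: Stab_def act_set_id id_dih)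
  ultimately have "(False, k) \<in> Stab n (lift n d A)" using Stab_lift[OF n d A kn] by simp
  then have "(False, k mod e) \<in> Stab e B" using Stab_lift[OF n e B kn] eq by simp
  then have "k mod e = 0" using SB by simp
  then show ?thesis using e by (simp add: k_def mod_mod_cancel dvd_eq_mod_eq_0)
qed

theorem proposition2p3:
  fixes n :: nat
  assumes "n \<ge> 1"
  shows "card {Y \<in> orbits n. \<forall>X\<in>Y. Stab n X \<subseteq> rotations n}
           = (\<Sum>d\<in>{d. d dvd n}. orb 1 d)"
proof -
  have n: "n > 0" using assms by simp
  define F where "F d = {Y \<in> orbits d. card Y = 2 * d}" for d
  define \<Phi> where "\<Phi> d Y = lift n d ` Y" for d Y
  define L where "L = {Y \<in> orbits n. \<forall>X\<in>Y. Stab n X \<subseteq> rotations n}"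
  have D: "finite {d. d dvd n}" using n by simp
  have Dpos: "d > 0" if "d \<in> {d. d dvd n}" for d using that n by (auto intro: Nat.gr0I)
  have orbsub: "Y \<subseteq> Pow {0..<d}" if dp: "d > 0" and Yo: "Y \<in> orbits d" for d Y
  proof
    fix Z assume "Z \<in> Y"
    then obtain X g where "Z = act_set d g X" using Yo by (auto simp: orbits_def orbit_def)
    then show "Z \<in> Pow {0..<d}" using act_set_sub[OF dp] by simp
  qed
  have finF: "finite (F d)" if "d > 0" for d
  proof (rule finite_subset)
    show "F d \<subseteq> Pow (Pow {0..<d})" using orbsub[OF that] by (auto simp: F_def)
  qed simp
  have injF: "inj_on (\<Phi> d) (F d)" if "d \<in> {d. d dvd n}" for d
  proof -
    have d: "d > 0" "d \<le> n" using Dpos[OF that] that n by (auto intro: dvd_imp_le)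
    have inj: "inj_on (lift n d) (Pow {0..<d})"
      by (rule inj_onI) (use lift_inj[OF d] in auto)
    show ?thesis
    proof (rule inj_onI)
      fix Y1 Y2 assume "Y1 \<in> F d" "Y2 \<in> F d" "\<Phi> d Y1 = \<Phi> d Y2"
      then show "Y1 = Y2" using inj_on_image_eq_iff[OF inj] orbsub[OF d(1)]
        by (auto simp: F_def \<Phi>_def)
    qed
  qed
  have LU: "L = (\<Union>d\<in>{d. d dvd n}. \<Phi> d ` F d)"
  proof
    show "L \<subseteq> (\<Union>d\<in>{d. d dvd n}. \<Phi> d ` F d)"
    proof
      fix Y assume "Y \<in> L"
      then obtain X where X: "X \<in> Xfam n" "Y = orbit n X" and R: "\<forall>Z\<in>Y. Stab n Z \<subseteq> rotations n"
        by (auto simp: L_def orbits_def)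
      have "X \<in> Y" using X n orbit_self Stab_sub by blast
      then have "Stab n X \<subseteq> rotations n" using R by blast
      then obtain d X' where dX: "d > 0" "d dvd n" "X' \<in> Xfam d" "Stab d X' = {(False, 0)}" "X = lift n d X'"
        using period[OF n X(1)] by blast
      have X'S: "X' \<subseteq> {0..<d}" using dX Stab_sub by blast
      have "Y = \<Phi> d (orbit d X')" using X dX orbit_lift[OF n dX(1,2) X'S] by (simp add: \<Phi>_def)
      moreover have "orbit d X' \<in> F d"
        using dX orbit_card_iff[OF dX(1) X'S] by (auto simp: F_def orbits_def)
      ultimately show "Y \<in> (\<Union>d\<in>{d. d dvd n}. \<Phi> d ` F d)" using dX by blast
    qed
  next
    show "(\<Union>d\<in>{d. d dvd n}. \<Phi> d ` F d) \<subseteq> L"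
    proof
      fix Y assume "Y \<in> (\<Union>d\<in>{d. d dvd n}. \<Phi> d ` F d)"
      then obtain d Y' where dY: "d dvd n" "Y' \<in> F d" "Y = \<Phi> d Y'" by blast
      have d: "d > 0" using Dpos dY by blast
      obtain X where X: "X \<in> Xfam d" "Y' = orbit d X" using dY by (auto simp: F_def orbits_def)
      have XS: "X \<subseteq> {0..<d}" using X Stab_sub by blast
      have Y: "Y = orbit n (lift n d X)" using dY X orbit_lift[OF n d dY(1) XS] by (simp add: \<Phi>_def)
      have "lift n d X \<in> Xfam n" using lift_Xfam[OF n d dY(1) XS] X by simp
      then have "Y \<in> orbits n" using Y by (simp add: orbits_def)
      moreover have "Stab n Z \<subseteq> rotations n" if ZY: "Z \<in> Y" for Z
      proof -
        obtain Z' where Z': "Z' \<in> Y'" "Z = lift n d Z'" using ZY dY by (auto simp: \<Phi>_def)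
        have Z'S: "Z' \<subseteq> {0..<d}" and SZ: "Stab d Z' = {(False, 0)}"
          using F_mem[OF d _ _ Z'(1)] dY by (auto simp: F_def)
        show ?thesis
        proof
          fix g assume g: "g \<in> Stab n Z"
          then obtain b k where bk: "g = (b, k)" "k < n" by (auto simp: Stab_def dihedral_def)
          then have "(b, k mod d) \<in> Stab d Z'" using Stab_lift[OF n d dY(1) Z'S bk(2)] g Z' by simp
          then have "b = False" using SZ by simp
          then show "g \<in> rotations n" using bk by (simp add: rotations_def)
        qed
      qed
      ultimately show "Y \<in> L" by (simp add: L_def)
    qed
  qed
  have disj: "\<Phi> d ` F d \<inter> \<Phi> e ` F e = {}" if "d \<in> {d. d dvd n}" "e \<in> {d. d dvd n}" "d \<noteq> e" for d e
  proof (rule ccontr)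
    assume "\<Phi> d ` F d \<inter> \<Phi> e ` F e \<noteq> {}"
    then obtain Y1 Y2 where Y: "Y1 \<in> F d" "Y2 \<in> F e" "\<Phi> d Y1 = \<Phi> e Y2" by blast
    have d: "d > 0" "d dvd n" and e: "e > 0" "e dvd n" using that Dpos by auto
    obtain X1 where X1: "X1 \<in> Xfam d" "Y1 = orbit d X1" using Y by (auto simp: F_def orbits_def)
    have X1S: "X1 \<subseteq> {0..<d}" using X1 Stab_sub by blast
    have "X1 \<in> Y1" using X1 X1S d orbit_self by blast
    then have "lift n d X1 \<in> \<Phi> e Y2" using Y by (auto simp: \<Phi>_def)
    then obtain Z where Z: "Z \<in> Y2" "lift n d X1 = lift n e Z" by (auto simp: \<Phi>_def)
    have ZS: "Z \<subseteq> {0..<e}" "Stab e Z = {(False, 0)}" using F_mem[OF e(1) _ _ Z(1)] Y by (auto simp: F_def)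
    have S1: "Stab d X1 = {(False, 0)}" using F_mem[OF d(1) _ _ \<open>X1 \<in> Y1\<close>] Y by (auto simp: F_def)
    have "e dvd d" using lift_eq_dvd[OF n d e X1S ZS Z(2)] .
    moreover have "d dvd e" using lift_eq_dvd[OF n e d ZS(1) X1S S1 Z(2)[symmetric]] .
    ultimately show False using that(3) by (simp add: dvd_antisym)
  qed
  have "card L = (\<Sum>d\<in>{d. d dvd n}. card (\<Phi> d ` F d))"
    unfolding LU by (rule card_UN_disjoint[OF D]) (use finF Dpos disj in auto)
  also have "\<dots> = (\<Sum>d\<in>{d. d dvd n}. card (F d))"
    by (rule sum.cong) (use injF card_image in auto)
  also have "\<dots> = (\<Sum>d\<in>{d. d dvd n}. orb 1 d)" by (simp add: F_def orb_def)
  finally show ?thesis by (simp add: L_def)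
qed

end
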